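(* Let $N=\{1,\dots,n\}$, let $\tilde Q\in\mathbb{R}^{n\times n}$ be symmetric positive definite with smallest eigenvalue $\mu>0$ and spectral norm $\|\tilde Q\|$, $\tilde d\in\mathbb{R}^n$, and $a,b\in\mathbb{R}^n$ with $b\le a$ componentwise. Let $A,B\subseteq N$ be disjoint, $I=N\setminus(A\cup B)$, and let $(x,s,t)$ be the KKT solution for $(A,B)$. Let $C=\{i: x_i<b_i \text{ or } s_i<0\}$, $D=\{i: x_i>a_i \text{ or } t_i>0\}$, and let $(y,u,v)$ be the KKT solution for $(C,D)$. Define $S=\{i\in A: s_i\ge0\}$, $T=\{i\in B: t_i\le 0\}$, $U=\{i\in I: x_i<b_i\}$, $V=\{i\in I: x_i>a_i\}$, $W=U\cup V$, $\overline W=N\setminus W$, $R=I\setminus W$, $K=\{i\in S\cup T\cup R: y_i<b_i\}$, $L=\{i\in S\cup T\cup R: y_i>a_i\}$ and $z=y-x$. Then for all $c,d\ge 0$, $$2\big(L_{c,d}(y,u,v)-L_{c,d}(x,s,t)\big)\le\|\tilde Q\|\,\|z_W\|^2-\mu\|z_{\overline W}\|^2+c\|z_K\|^2+d\|z_L\|^2-c\|z_U\|^2-d\|z_V\|^2.$$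
   Context: For disjoint $A_1,A_2\subseteq N$, the KKT solution for $(A_1,A_2)$ is the unique triple $(x,s,t)\in(\mathbb{R}^n)^3$ with $x_{A_1}=b_{A_1}$, $x_{A_2}=a_{A_2}$, $s_i=0$ for $i\notin A_1$, $t_i=0$ for $i\notin A_2$, and $\tilde Qx+\tilde d+s+t=0$. The merit function is $L_{c,d}(x,s,t)=\tilde J(x)+\frac c2\|g(x)\|^2+\frac d2\|h(x)\|^2$ with $\tilde J(x)=\tfrac12x^{\top}\tilde Qx+\tilde d^{\top}x$, $g(x)=\max(b-x,0)$, $h(x)=\max(x-a,0)$ componentwise. For $M\subseteq N$, $z_M$ is the subvector of $z$ indexed by $M$; $\|\cdot\|$ is the Euclidean norm. *)

theory Defs
  imports "HOL-Analysis.Analysis"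
begin

text \<open>Vectors in R^n are modelled as real^'n with a finite index type 'n; N = UNIV.\<close>

definition is_eigenvalue :: "real^'n^'n \<Rightarrow> real \<Rightarrow> bool" where
  "is_eigenvalue Q lam \<longleftrightarrow> (\<exists>v. v \<noteq> 0 \<and> Q *v v = lam *\<^sub>R v)"

definition smallest_eigenvalue :: "real^'n^'n \<Rightarrow> real \<Rightarrow> bool" where
  "smallest_eigenvalue Q \<mu> \<longleftrightarrow> is_eigenvalue Q \<mu> \<and> (\<forall>lam. is_eigenvalue Q lam \<longrightarrow> \<mu> \<le> lam)"

definition pos_def :: "real^'n^'n \<Rightarrow> bool" where
  "pos_def Q \<longleftrightarrow> (\<forall>x. x \<noteq> 0 \<longrightarrow> x \<bullet> (Q *v x) > 0)"

definition spec_norm :: "real^'n^'n \<Rightarrow> real" where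
  "spec_norm Q = onorm (\<lambda>x. Q *v x)"

definition is_kkt :: "real^'n^'n \<Rightarrow> real^'n \<Rightarrow> real^'n \<Rightarrow> real^'n \<Rightarrow> 'n set \<Rightarrow> 'n set
    \<Rightarrow> real^'n \<Rightarrow> real^'n \<Rightarrow> real^'n \<Rightarrow> bool" where
  "is_kkt Q d a b A1 A2 x s t \<longleftrightarrow>
     (\<forall>i\<in>A1. x$i = b$i) \<and> (\<forall>i\<in>A2. x$i = a$i) \<and>
     (\<forall>i. i \<notin> A1 \<longrightarrow> s$i = 0) \<and> (\<forall>i. i \<notin> A2 \<longrightarrow> t$i = 0) \<and>
     Q *v x + d + s + t = 0"

definition Jfun :: "real^'n^'n \<Rightarrow> real^'n \<Rightarrow> real^'n \<Rightarrow> real" where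
  "Jfun Q d x = (1/2) * (x \<bullet> (Q *v x)) + d \<bullet> x"

definition gfun :: "real^'n \<Rightarrow> real^'n \<Rightarrow> real^'n" where
  "gfun b x = (\<chi> i. max (b$i - x$i) 0)"

definition hfun :: "real^'n \<Rightarrow> real^'n \<Rightarrow> real^'n" where
  "hfun a x = (\<chi> i. max (x$i - a$i) 0)"

text \<open>Merit function L_{c,d}(x,s,t) (independent of s,t).\<close>
definition merit :: "real^'n^'n \<Rightarrow> real^'n \<Rightarrow> real^'n \<Rightarrow> real^'n \<Rightarrow> real \<Rightarrow> real
    \<Rightarrow> real^'n \<Rightarrow> real^'n \<Rightarrow> real^'n \<Rightarrow> real" where
  "merit Q dt a b c d x s t =
     Jfun Q dt x + c/2 * (norm (gfun b x))\<^sup>2 + d/2 * (norm (hfun a x))\<^sup>2"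

definition subnorm :: "'n set \<Rightarrow> real^'n \<Rightarrow> real" where
  "subnorm M z = sqrt (\<Sum>i\<in>M. (z$i)\<^sup>2)"

end

theory Submission imports Defs begin

lemma symQ_inner:
  fixes Q :: "real^'n^'n"
  assumes "transpose Q = Q"
  shows "x \<bullet> (Q *v y) = y \<bullet> (Q *v x)"
proof -
  have "x \<bullet> (Q *v y) = (x v* Q) \<bullet> y" by (simp add: dot_lmul_matrix)
  also have "x v* Q = transpose Q *v x" by simp
  finally show ?thesis using assms by (simp add: inner_commute)
qed

lemma sq_helper:
  fixes p q r :: real
  assumes "0 \<le> p - q" "p - q \<le> r - q"
  shows "(p - q)\<^sup>2 \<le> (q - r)\<^sup>2"
proof -
  have "(p - q)\<^sup>2 \<le> (r - q)\<^sup>2" using assms by (intro power_mono) auto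
  thus ?thesis by (simp add: power2_commute)
qed

lemma sq_helper2:
  fixes p q r :: real
  assumes "0 \<le> q - p" "q - p \<le> q - r"
  shows "(q - p)\<^sup>2 \<le> (q - r)\<^sup>2"
  using assms by (intro power_mono) auto

lemma quad_le_spec:
  fixes Q :: "real^'n^'n"
  shows "x \<bullet> (Q *v x) \<le> spec_norm Q * (norm x)\<^sup>2"
proof -
  have "x \<bullet> (Q *v x) \<le> norm x * norm (Q *v x)"
    by (metis Cauchy_Schwarz_ineq2 abs_le_D1)
  also have "norm (Q *v x) \<le> spec_norm Q * norm x"
    unfolding spec_norm_def by (rule onorm) simp
  hence "norm x * norm (Q *v x) \<le> norm x * (spec_norm Q * norm x)"
    by (simp add: mult_left_mono)
  finally show ?thesis by (simp add: power2_eq_square algebra_simps)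
qed

lemma quad_ge_eig:
  fixes Q :: "real^'n^'n"
  assumes sym: "transpose Q = Q" and mu: "smallest_eigenvalue Q \<mu>"
  shows "x \<bullet> (Q *v x) \<ge> \<mu> * (norm x)\<^sup>2"
proof -
  define f where "f = (\<lambda>x::real^'n. x \<bullet> (Q *v x))"
  have cont: "continuous_on (sphere 0 1) f"
    unfolding f_def by (intro continuous_intros linear_continuous_on) simp
  obtain i :: 'n where True by simp
  have ne: "sphere (0::real^'n) 1 \<noteq> {}"
    using norm_axis_1[of i] by (metis mem_sphere_0 empty_iff)
  obtain v where v: "v \<in> sphere 0 1" and vmin: "\<And>y. y \<in> sphere 0 1 \<Longrightarrow> f v \<le> f y"
    using continuous_attains_inf[OF compact_sphere ne cont] by blast
  define m where "m = f v"
  have nv: "norm v = 1" using v by simp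
  have p: "f y \<ge> m * (norm y)\<^sup>2" for y
  proof (cases "y = 0")
    case True thus ?thesis by (simp add: f_def)
  next
    case False
    hence ny: "norm y > 0" by simp
    have "m \<le> f ((1/norm y) *\<^sub>R y)" unfolding m_def by (rule vmin) (use ny in simp)
    also have "f ((1/norm y) *\<^sub>R y) = f y / (norm y)\<^sup>2"
      by (simp add: f_def matrix_vector_mult_scaleR power2_eq_square)
    finally show ?thesis using ny by (simp add: field_simps)
  qed
  define r where "r = Q *v v - m *\<^sub>R v"
  define p where "p = (\<lambda>y. f y - m * (norm y)\<^sup>2)"
  have p0: "p y \<ge> 0" for y using p[of y] by (simp add: p_def)
  have pv: "p v = 0" using nv by (simp add: p_def m_def)
  have exp: "p (v - e *\<^sub>R r) = p v - 2 * e * (r \<bullet> r) + e\<^sup>2 * p r" for e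
  proof -
    have s1: "v \<bullet> (Q *v r) = r \<bullet> (Q *v v)" by (rule symQ_inner[OF sym])
    have s2: "v \<bullet> (Q *v (Q *v v)) = (Q *v v) \<bullet> (Q *v v)" by (rule symQ_inner[OF sym])
    have s3: "(Q *v v) \<bullet> v = v \<bullet> (Q *v v)" by (rule inner_commute)
    show ?thesis
      unfolding p_def f_def power2_norm_eq_inner
      by (simp add: r_def matrix_vector_mult_diff_distrib matrix_vector_mult_scaleR
          inner_diff_left inner_diff_right s1[unfolded r_def] s2 s3 algebra_simps power2_eq_square)
  qed
  have rr: "r \<bullet> r = 0"
  proof (cases "p r \<le> 0")
    case True
    have "0 \<le> p (v - 1 *\<^sub>R r)" by (rule p0)
    moreover have "0 \<le> r \<bullet> r" by simp
    moreover have "p (v - 1 *\<^sub>R r) = p v - 2 * (r \<bullet> r) + p r" using exp[of 1] by simp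
    ultimately have "r \<bullet> r \<le> 0" using pv True by linarith
    thus ?thesis using \<open>0 \<le> r \<bullet> r\<close> by linarith
  next
    case False
    have "0 \<le> p (v - (r \<bullet> r / p r) *\<^sub>R r)" by (rule p0)
    hence "0 \<le> - 2 * (r \<bullet> r / p r) * (r \<bullet> r) + (r \<bullet> r / p r)\<^sup>2 * p r"
      using exp pv by simp
    also have "\<dots> = - (r \<bullet> r)\<^sup>2 / p r" using False by (simp add: power2_eq_square field_simps)
    finally have X: "(r \<bullet> r)\<^sup>2 / p r \<le> 0" by linarith
    have "(r \<bullet> r)\<^sup>2 = ((r \<bullet> r)\<^sup>2 / p r) * p r" using False by simp
    also have "\<dots> \<le> 0" using X False by (intro mult_nonpos_nonneg) auto
    finally have "(r \<bullet> r)\<^sup>2 \<le> 0" .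
    thus ?thesis by simp
  qed
  hence "Q *v v = m *\<^sub>R v" by (simp add: r_def)
  hence "is_eigenvalue Q m" unfolding is_eigenvalue_def using nv by (intro exI[of _ v]) auto
  hence "\<mu> \<le> m" using mu unfolding smallest_eigenvalue_def by blast
  hence "\<mu> * (norm x)\<^sup>2 \<le> m * (norm x)\<^sup>2" by (simp add: mult_right_mono)
  also have "\<dots> \<le> f x" by (rule p)
  finally show ?thesis by (simp add: f_def)
qed

theorem mainTheorem4:
  fixes Q :: "real^'n^'n" and dt a b x s t y u v z :: "real^'n"
    and \<mu> :: real and A B C D S T U V W R K L :: "'n set"
  assumes symQ: "transpose Q = Q"
    and pdQ: "pos_def Q"
    and mu: "smallest_eigenvalue Q \<mu>"
    and ba: "\<forall>i. b$i \<le> a$i"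
    and AB: "A \<inter> B = {}"
    and kkt1: "is_kkt Q dt a b A B x s t"
    and C_def: "C = {i. x$i < b$i \<or> s$i < 0}"
    and D_def: "D = {i. x$i > a$i \<or> t$i > 0}"
    and kkt2: "is_kkt Q dt a b C D y u v"
    and S_def: "S = {i\<in>A. s$i \<ge> 0}"
    and T_def: "T = {i\<in>B. t$i \<le> 0}"
    and U_def: "U = {i\<in>UNIV - (A \<union> B). x$i < b$i}"
    and V_def: "V = {i\<in>UNIV - (A \<union> B). x$i > a$i}"
    and W_def: "W = U \<union> V"
    and R_def: "R = (UNIV - (A \<union> B)) - W"
    and K_def: "K = {i\<in>S \<union> T \<union> R. y$i < b$i}"
    and L_def: "L = {i\<in>S \<union> T \<union> R. y$i > a$i}"
    and z_def: "z = y - x"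
  shows "\<forall>c d. c \<ge> 0 \<longrightarrow> d \<ge> 0 \<longrightarrow>
    2 * (merit Q dt a b c d y u v - merit Q dt a b c d x s t)
      \<le> spec_norm Q * (subnorm W z)\<^sup>2 - \<mu> * (subnorm (UNIV - W) z)\<^sup>2
         + c * (subnorm K z)\<^sup>2 + d * (subnorm L z)\<^sup>2
         - c * (subnorm U z)\<^sup>2 - d * (subnorm V z)\<^sup>2"
proof (intro allI impI)
  fix c d :: real
  assume c0: "c \<ge> 0" and d0: "d \<ge> 0"
  have xA: "\<And>i. i \<in> A \<Longrightarrow> x$i = b$i" and xB: "\<And>i. i \<in> B \<Longrightarrow> x$i = a$i"
    and sA: "\<And>i. i \<notin> A \<Longrightarrow> s$i = 0" and tB: "\<And>i. i \<notin> B \<Longrightarrow> t$i = 0"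
    and eq1: "Q *v x + dt + s + t = 0"
    using kkt1 unfolding is_kkt_def by auto
  have yC: "\<And>i. i \<in> C \<Longrightarrow> y$i = b$i" and yD: "\<And>i. i \<in> D \<Longrightarrow> y$i = a$i"
    and uC: "\<And>i. i \<notin> C \<Longrightarrow> u$i = 0" and vD: "\<And>i. i \<notin> D \<Longrightarrow> v$i = 0"
    and eq2: "Q *v y + dt + u + v = 0"
    using kkt2 unfolding is_kkt_def by auto
  define w where "w = (\<chi> i. if i \<in> W then z$i else 0)"
  define zb where "zb = (\<chi> i. if i \<in> W then 0 else z$i)"
  have zsplit: "z = w + zb" by (simp add: w_def zb_def vec_eq_iff)
  have Qz: "Q *v z = (s + t) - (u + v)"
  proof -
    have "Q *v z = Q *v y - Q *v x" by (simp add: z_def matrix_vector_mult_diff_distrib)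
    also have "\<dots> = (s + t) - (u + v)" using eq1 eq2
      by (metis (no_types, lifting) add.commute add_diff_cancel_left' add_left_cancel diff_add_cancel
          diff_diff_eq2 group_cancel.add2 minus_diff_eq)
    finally show ?thesis .
  qed
  have W_I: "\<And>i. i \<in> W \<Longrightarrow> i \<notin> A \<and> i \<notin> B" using W_def U_def V_def by auto
  have zb_uv: "zb \<bullet> (u + v) = 0"
  proof -
    have "zb$i * (u$i + v$i) = 0" for i
    proof (cases "i \<in> C \<or> i \<in> D")
      case True
      have "zb$i = 0"
      proof (cases "i \<in> W")
        case False
        hence "i \<notin> U" "i \<notin> V" using W_def by auto
        show ?thesis
        proof (cases "i \<in> A")
          case True
          hence "z$i = 0" using xA yC yD ba C_def D_def tB AB \<open>i \<in> C \<or> i \<in> D\<close> z_def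
            by (smt (verit, best) disjoint_iff mem_Collect_eq vector_minus_component)
          thus ?thesis by (simp add: zb_def)
        next
          case nA: False
          show ?thesis
          proof (cases "i \<in> B")
            case True
            hence "z$i = 0" using xB yC yD ba C_def D_def sA nA \<open>i \<in> C \<or> i \<in> D\<close> z_def
              by (smt (verit, best) mem_Collect_eq vector_minus_component)
            thus ?thesis by (simp add: zb_def)
          next
            case False
            hence False using nA \<open>i \<notin> U\<close> \<open>i \<notin> V\<close> U_def V_def C_def D_def sA tB \<open>i \<in> C \<or> i \<in> D\<close>
              by auto
            thus ?thesis ..
          qed
        qed
      qed (simp add: zb_def)
      thus ?thesis by simp
    qed (use uC vD in auto)
    thus ?thesis unfolding inner_vec_def by (simp add: sum.neutral)
  qed
  have w_st: "w \<bullet> (s + t) = 0"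
  proof -
    have "w$i * (s$i + t$i) = 0" for i
      using W_I sA tB by (simp add: w_def)
    thus ?thesis unfolding inner_vec_def by (simp add: sum.neutral)
  qed
  have sym1: "\<And>p q. p \<bullet> (Q *v q) = q \<bullet> (Q *v p)" by (rule symQ_inner[OF symQ])
  have Jdiff: "2 * (Jfun Q dt y - Jfun Q dt x) = w \<bullet> (Q *v w) - zb \<bullet> (Q *v zb)"
  proof -
    have y: "y = x + z" by (simp add: z_def)
    have "Jfun Q dt y - Jfun Q dt x = z \<bullet> (Q *v x + dt) + (1/2) * (z \<bullet> (Q *v z))"
      unfolding Jfun_def y using sym1[of x z]
      by (simp add: matrix_vector_right_distrib inner_add_left inner_add_right algebra_simps inner_commute)
    also have "Q *v x + dt = - (s + t)" using eq1 by (simp add: eq_neg_iff_add_eq_0 algebra_simps)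
    finally have J1: "Jfun Q dt y - Jfun Q dt x = - (z \<bullet> (s + t)) + (1/2) * (z \<bullet> (Q *v z))"
      by (simp add: inner_diff_right inner_add_right)
    have "z \<bullet> (s + t) = zb \<bullet> (s + t)" using w_st zsplit by (simp add: inner_add_left)
    also have "\<dots> = zb \<bullet> (Q *v z + (u + v))" using Qz by simp
    also have "\<dots> = zb \<bullet> (Q *v z)" using zb_uv by (simp add: inner_add_right)
    finally have zst: "z \<bullet> (s + t) = zb \<bullet> (Q *v w) + zb \<bullet> (Q *v zb)"
      using zsplit by (simp add: matrix_vector_right_distrib inner_add_right)
    have zQz: "z \<bullet> (Q *v z) = w \<bullet> (Q *v w) + 2 * (zb \<bullet> (Q *v w)) + zb \<bullet> (Q *v zb)"
      using zsplit sym1[of w zb]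
      by (simp add: matrix_vector_right_distrib inner_add_right inner_add_left)
    have "2 * (Jfun Q dt y - Jfun Q dt x) = -2 * (z \<bullet> (s + t)) + z \<bullet> (Q *v z)"
      using J1 by simp
    thus ?thesis unfolding zst zQz by simp
  qed
  have nw: "(norm w)\<^sup>2 = (subnorm W z)\<^sup>2"
  proof -
    have "(norm w)\<^sup>2 = (\<Sum>i\<in>UNIV. if i \<in> W then (z$i)\<^sup>2 else 0)"
      unfolding power2_norm_eq_inner inner_vec_def
      by (intro sum.cong) (auto simp: w_def power2_eq_square)
    also have "\<dots> = (\<Sum>i\<in>W. (z$i)\<^sup>2)" by (simp add: sum.If_cases)
    finally show ?thesis unfolding subnorm_def by (simp add: sum_nonneg)
  qed
  have nzb: "(norm zb)\<^sup>2 = (subnorm (UNIV - W) z)\<^sup>2"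
  proof -
    have "(norm zb)\<^sup>2 = (\<Sum>i\<in>UNIV. if i \<in> UNIV - W then (z$i)\<^sup>2 else 0)"
      unfolding power2_norm_eq_inner inner_vec_def
      by (intro sum.cong) (auto simp: zb_def power2_eq_square)
    also have "\<dots> = (\<Sum>i\<in>UNIV - W. (z$i)\<^sup>2)"
    proof -
      have e: "{x. x \<notin> W} = UNIV - W" by auto
      show ?thesis by (subst sum.If_cases) (simp_all add: Int_absorb1 e)
    qed
    finally show ?thesis unfolding subnorm_def by (simp add: sum_nonneg)
  qed
  have sn: "(subnorm M z)\<^sup>2 = (\<Sum>i\<in>UNIV. if i \<in> M then (z$i)\<^sup>2 else 0)" for M
    unfolding subnorm_def by (simp add: sum_nonneg sum.If_cases)
  have nv: "(norm p)\<^sup>2 = (\<Sum>i\<in>UNIV. (p$i)\<^sup>2)" for p :: "real^'n"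
    unfolding power2_norm_eq_inner inner_vec_def by (simp add: power2_eq_square)
  have gy: "(norm (gfun b y))\<^sup>2 \<le> (subnorm K z)\<^sup>2"
    unfolding sn nv
  proof (intro sum_mono)
    fix i
    show "((gfun b y)$i)\<^sup>2 \<le> (if i \<in> K then (z$i)\<^sup>2 else 0)"
    proof (cases "y$i < b$i")
      case True
      have nC: "i \<notin> C" using yC True by force
      have nD: "i \<notin> D" using yD[of i] True ba[rule_format, of i] by linarith
      have xb: "x$i \<ge> b$i" using nC C_def by auto
      have xa: "x$i \<le> a$i" using nD D_def by auto
      have "i \<in> K"
        using nC nD xb xa True unfolding K_def S_def T_def R_def W_def U_def V_def C_def D_def
        by auto
      moreover have "((gfun b y)$i)\<^sup>2 \<le> (z$i)\<^sup>2"
        using True xb by (simp add: gfun_def z_def sq_helper)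
      ultimately show ?thesis by simp
    qed (simp add: gfun_def)
  qed
  have hy: "(norm (hfun a y))\<^sup>2 \<le> (subnorm L z)\<^sup>2"
    unfolding sn nv
  proof (intro sum_mono)
    fix i
    show "((hfun a y)$i)\<^sup>2 \<le> (if i \<in> L then (z$i)\<^sup>2 else 0)"
    proof (cases "y$i > a$i")
      case True
      have nD: "i \<notin> D" using yD True by force
      have nC: "i \<notin> C" using yC[of i] True ba[rule_format, of i] by linarith
      have xb: "x$i \<ge> b$i" using nC C_def by auto
      have xa: "x$i \<le> a$i" using nD D_def by auto
      have "i \<in> L"
        using nC nD xb xa True unfolding L_def S_def T_def R_def W_def U_def V_def C_def D_def
        by auto
      moreover have "((hfun a y)$i)\<^sup>2 \<le> (z$i)\<^sup>2"
        using True xa by (simp add: hfun_def z_def sq_helper2)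
      ultimately show ?thesis by simp
    qed (simp add: hfun_def)
  qed
  have gx: "(norm (gfun b x))\<^sup>2 = (subnorm U z)\<^sup>2"
    unfolding sn nv
  proof (intro sum.cong refl)
    fix i
    show "((gfun b x)$i)\<^sup>2 = (if i \<in> U then (z$i)\<^sup>2 else 0)"
    proof (cases "x$i < b$i")
      case True
      have nA: "i \<notin> A" using xA True by force
      have nB: "i \<notin> B" using xB[of i] True ba[rule_format, of i] by linarith
      have iU: "i \<in> U" using nA nB True U_def by auto
      have "i \<in> C" using True C_def by auto
      hence "y$i = b$i" by (rule yC)
      thus ?thesis using True iU by (simp add: gfun_def z_def power2_commute)
    next
      case False
      hence "i \<notin> U" using U_def by auto
      thus ?thesis using False by (simp add: gfun_def)
    qed
  qed
  have hx: "(norm (hfun a x))\<^sup>2 = (subnorm V z)\<^sup>2"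
    unfolding sn nv
  proof (intro sum.cong refl)
    fix i
    show "((hfun a x)$i)\<^sup>2 = (if i \<in> V then (z$i)\<^sup>2 else 0)"
    proof (cases "x$i > a$i")
      case True
      have nB: "i \<notin> B" using xB True by force
      have nA: "i \<notin> A" using xA[of i] True ba[rule_format, of i] by linarith
      have iV: "i \<in> V" using nA nB True V_def by auto
      have "i \<in> D" using True D_def by auto
      hence "y$i = a$i" by (rule yD)
      thus ?thesis using True iV by (simp add: hfun_def z_def power2_commute)
    next
      case False
      hence "i \<notin> V" using V_def by auto
      thus ?thesis using False by (simp add: hfun_def)
    qed
  qed
  have q1: "w \<bullet> (Q *v w) \<le> spec_norm Q * (subnorm W z)\<^sup>2"
    using quad_le_spec[of w Q] nw by simp
  have q2: "zb \<bullet> (Q *v zb) \<ge> \<mu> * (subnorm (UNIV - W) z)\<^sup>2"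
    using quad_ge_eig[OF symQ mu, of zb] nzb by simp
  have "2 * (merit Q dt a b c d y u v - merit Q dt a b c d x s t)
      = 2 * (Jfun Q dt y - Jfun Q dt x) + c * ((norm (gfun b y))\<^sup>2 - (norm (gfun b x))\<^sup>2)
        + d * ((norm (hfun a y))\<^sup>2 - (norm (hfun a x))\<^sup>2)"
    unfolding merit_def by (simp add: algebra_simps)
  moreover have "c * ((norm (gfun b y))\<^sup>2 - (norm (gfun b x))\<^sup>2) \<le> c * ((subnorm K z)\<^sup>2 - (subnorm U z)\<^sup>2)"
    using gy gx c0 by (intro mult_left_mono) auto
  moreover have "d * ((norm (hfun a y))\<^sup>2 - (norm (hfun a x))\<^sup>2) \<le> d * ((subnorm L z)\<^sup>2 - (subnorm V z)\<^sup>2)"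
    using hy hx d0 by (intro mult_left_mono) auto
  ultimately show "2 * (merit Q dt a b c d y u v - merit Q dt a b c d x s t)
      \<le> spec_norm Q * (subnorm W z)\<^sup>2 - \<mu> * (subnorm (UNIV - W) z)\<^sup>2
         + c * (subnorm K z)\<^sup>2 + d * (subnorm L z)\<^sup>2
         - c * (subnorm U z)\<^sup>2 - d * (subnorm V z)\<^sup>2"
    using Jdiff q1 q2 by (simp add: algebra_simps)
qed

end
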